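(* Let $X \subseteq \mathbb{P}^N$ be an irreducible, nondegenerate variety over an algebraically closed field of characteristic zero, with generic rank $g$ and maximal rank $m$. For $1 \leq k \leq g-1$, $\sigma_k(X) \not\subset W_{2g-k+1}$. In particular, if $m=2g$, then for $1 \leq k \leq g-1$, $\sigma_k(X) \not\subset W_{m-k+1}$.
   Context: For a nondegenerate variety $X\subseteq\mathbb{P}^N$, the rank of a point $p$ is the least $r$ such that $p$ lies in the linear span of some $r$ distinct points of $X$; $W_k$ is the Zariski closure of the set of points of rank exactly $k$ (empty if there are none); $g$ is the rank of a general point and $m$ the maximum rank. The $k$-th secant variety $\sigma_k(X)$ is the closure of the set of points of rank at most $k$. *)

theory Defs
  imports "HOL-Computational_Algebra.Polynomial"
begin

text \<open>Projective space P^N over a field 'a is modelled through affine cones in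
  the affine space 'a^('n) of functions 'n \<Rightarrow> 'a, where CARD('n) = N+1.
  A point of P^N is represented by any nonzero vector; a subset of P^N by a cone
  of nonzero vectors (closed under nonzero scaling).\<close>

definition alg_closed_field :: "'a::field itself \<Rightarrow> bool" where
  "alg_closed_field _ \<longleftrightarrow> (\<forall>p :: 'a poly. degree p > 0 \<longrightarrow> (\<exists>x. poly p x = 0))"

inductive_set polyfun :: "(('n \<Rightarrow> 'a::comm_ring_1) \<Rightarrow> 'a) set" where
  pf_const: "(\<lambda>x. c) \<in> polyfun"
| pf_coord: "(\<lambda>x. x i) \<in> polyfun"
| pf_add: "f \<in> polyfun \<Longrightarrow> g \<in> polyfun \<Longrightarrow> (\<lambda>x. f x + g x) \<in> polyfun"
| pf_mult: "f \<in> polyfun \<Longrightarrow> g \<in> polyfun \<Longrightarrow> (\<lambda>x. f x * g x) \<in> polyfun"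

definition zariski_closed :: "('n \<Rightarrow> 'a::comm_ring_1) set \<Rightarrow> bool" where
  "zariski_closed A \<longleftrightarrow> (\<exists>F \<subseteq> polyfun. A = {x. \<forall>f\<in>F. f x = 0})"

definition zariski_closure :: "('n \<Rightarrow> 'a::comm_ring_1) set \<Rightarrow> ('n \<Rightarrow> 'a) set" where
  "zariski_closure S = \<Inter>{A. zariski_closed A \<and> S \<subseteq> A}"

text \<open>Closure in P^N of a cone S (given by nonzero vectors).\<close>
definition proj_closure :: "('n \<Rightarrow> 'a::comm_ring_1) set \<Rightarrow> ('n \<Rightarrow> 'a) set" where
  "proj_closure S = zariski_closure S - {(\<lambda>_. 0)}"

definition smult_vec :: "'a::times \<Rightarrow> ('n \<Rightarrow> 'a) \<Rightarrow> ('n \<Rightarrow> 'a)" where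
  "smult_vec c x = (\<lambda>i. c * x i)"

definition proj_cone :: "('n \<Rightarrow> 'a::field) set \<Rightarrow> bool" where
  "proj_cone X \<longleftrightarrow> (\<lambda>_. 0) \<notin> X \<and> (\<forall>x\<in>X. \<forall>c. c \<noteq> 0 \<longrightarrow> smult_vec c x \<in> X)"

definition proj_variety :: "('n \<Rightarrow> 'a::field) set \<Rightarrow> bool" where
  "proj_variety X \<longleftrightarrow> proj_cone X \<and> X \<noteq> {} \<and> proj_closure X = X \<and>
     (\<forall>A B. zariski_closed A \<and> zariski_closed B \<and> X \<subseteq> A \<union> B \<longrightarrow> X \<subseteq> A \<or> X \<subseteq> B)"

definition nondegenerate :: "('n::finite \<Rightarrow> 'a::field) set \<Rightarrow> bool" where
  "nondegenerate X \<longleftrightarrow> \<not> (\<exists>a. a \<noteq> (\<lambda>_. 0) \<and> (\<forall>x\<in>X. (\<Sum>i\<in>UNIV. a i * x i) = 0))"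

definition lin_span :: "('n \<Rightarrow> 'a::field) set \<Rightarrow> ('n \<Rightarrow> 'a) set" where
  "lin_span S = {v. \<exists>T c. finite T \<and> T \<subseteq> S \<and> v = (\<lambda>i. \<Sum>x\<in>T. c x * x i)}"

definition proj_distinct :: "('n \<Rightarrow> 'a::field) list \<Rightarrow> bool" where
  "proj_distinct xs \<longleftrightarrow> (\<forall>i<length xs. \<forall>j<length xs. i \<noteq> j \<longrightarrow>
      (\<forall>c. xs ! j \<noteq> smult_vec c (xs ! i)))"

definition spanned_by :: "('n \<Rightarrow> 'a::field) set \<Rightarrow> nat \<Rightarrow> ('n \<Rightarrow> 'a) \<Rightarrow> bool" where
  "spanned_by X r v \<longleftrightarrow> (\<exists>xs. length xs = r \<and> set xs \<subseteq> X \<and> proj_distinct xs \<and> v \<in> lin_span (set xs))"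

definition X_rank :: "('n \<Rightarrow> 'a::field) set \<Rightarrow> ('n \<Rightarrow> 'a) \<Rightarrow> nat" where
  "X_rank X v = (LEAST r. spanned_by X r v)"

definition W_set :: "('n \<Rightarrow> 'a::field) set \<Rightarrow> nat \<Rightarrow> ('n \<Rightarrow> 'a) set" where
  "W_set X k = proj_closure {v. v \<noteq> (\<lambda>_. 0) \<and> X_rank X v = k}"

definition secant_var :: "('n \<Rightarrow> 'a::field) set \<Rightarrow> nat \<Rightarrow> ('n \<Rightarrow> 'a) set" where
  "secant_var X k = proj_closure {v. v \<noteq> (\<lambda>_. 0) \<and> X_rank X v \<le> k}"

definition generic_rank :: "('n \<Rightarrow> 'a::field) set \<Rightarrow> nat \<Rightarrow> bool" where
  "generic_rank X g \<longleftrightarrow> (\<exists>A. zariski_closed A \<and> A \<noteq> UNIV \<and>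
      (\<forall>v. v \<noteq> (\<lambda>_. 0) \<and> v \<notin> A \<longrightarrow> X_rank X v = g))"

definition max_rank :: "('n \<Rightarrow> 'a::field) set \<Rightarrow> nat \<Rightarrow> bool" where
  "max_rank X m \<longleftrightarrow> (\<exists>v. v \<noteq> (\<lambda>_. 0) \<and> X_rank X v = m) \<and> (\<forall>v. v \<noteq> (\<lambda>_. 0) \<longrightarrow> X_rank X v \<le> m)"

end

theory Submission
  imports Defs "HOL-Library.Function_Algebras"
begin


lemma smult_vec_apply: "smult_vec c x i = c * x i" by (simp add: smult_vec_def)

interpretation FV: vector_space "smult_vec :: 'a::field \<Rightarrow> ('n \<Rightarrow> 'a) \<Rightarrow> ('n \<Rightarrow> 'a)"
  by unfold_locales (auto simp: smult_vec_def fun_eq_iff algebra_simps)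

interpretation FVP: vector_space_pair "smult_vec :: 'a::field \<Rightarrow> ('n \<Rightarrow> 'a) \<Rightarrow> ('n \<Rightarrow> 'a)" "(*) :: 'a \<Rightarrow> 'a \<Rightarrow> 'a"
  by unfold_locales (auto simp: smult_vec_def fun_eq_iff algebra_simps)

lemma sum_smult_apply: "(\<Sum>a\<in>T. smult_vec (r a) a) i = (\<Sum>a\<in>T. r a * (a::'n\<Rightarrow>'a::field) i)"
  by (induct T rule: infinite_finite_induct) (auto simp: smult_vec_def)

lemma sum_fun_apply: "(\<Sum>a\<in>T. g a) (i::'n) = (\<Sum>a\<in>T. g a i :: 'b::comm_monoid_add)"
  by (induct T rule: infinite_finite_induct) auto

lemma lin_span_eq: "lin_span S = FV.span (S :: ('n \<Rightarrow> 'a::field) set)"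
  unfolding lin_span_def FV.span_explicit
  by (auto simp: fun_eq_iff sum_smult_apply)

lemma functional_repr:
  assumes "Vector_Spaces.linear smult_vec ((*) :: 'a \<Rightarrow> 'a \<Rightarrow> 'a) f"
  shows "f x = (\<Sum>i\<in>UNIV. f (\<lambda>j. if j = i then 1 else 0) * (x::'n::finite \<Rightarrow> 'a::field) i)"
proof -
  have "x = (\<Sum>i\<in>UNIV. smult_vec (x i) (\<lambda>j. if j = i then 1 else 0))"
    by (auto simp: fun_eq_iff sum_fun_apply smult_vec_def if_distrib cong: if_cong)
  then have "f x = f (\<Sum>i\<in>UNIV. smult_vec (x i) (\<lambda>j. if j = i then 1 else 0))" by simp
  also have "\<dots> = (\<Sum>i\<in>UNIV. x i * f (\<lambda>j. if j = i then 1 else 0))"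
    by (simp only: FVP.linear_sum[OF assms] FVP.linear_scale[OF assms])
  finally show ?thesis by (simp add: mult.commute)
qed

lemma nondeg_span:
  assumes "nondegenerate (X :: ('n::finite \<Rightarrow> 'a::field) set)"
  shows "FV.span X = UNIV"
proof (rule ccontr)
  assume "FV.span X \<noteq> UNIV"
  then obtain b where b: "b \<notin> FV.span X" by auto
  obtain B where B: "B \<subseteq> X" "FV.independent B" "X \<subseteq> FV.span B"
    using FV.maximal_independent_subset by blast
  have bB: "b \<notin> FV.span B" using b B FV.span_mono[of B X] by auto
  have ind: "FV.independent (insert b B)" using FV.independent_insertI[OF bB B(2)] .
  define f where "f = FVP.construct (insert b B) (\<lambda>x. if x = b then (1::'a) else 0)"
  have lin: "Vector_Spaces.linear smult_vec ((*) :: 'a \<Rightarrow> 'a \<Rightarrow> 'a) f"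
    unfolding f_def by (rule FVP.linear_construct[OF ind])
  have fb: "f b = 1" unfolding f_def by (simp add: FVP.construct_basis[OF ind])
  have fB: "f x = 0" if "x \<in> B" for x
    unfolding f_def using FVP.construct_basis[OF ind, of x] that bB FV.span_superset[of B] by auto
  have fX: "f x = 0" if "x \<in> FV.span B" for x
    using that
  proof (induct rule: FV.span_induct_alt)
    case base then show ?case using FVP.linear_0[OF lin] by (simp add: zero_fun_def)
  next
    case (step c x y) then show ?case
      by (simp only: FVP.linear_add[OF lin] FVP.linear_scale[OF lin] fB) simp
  qed
  define a where "a = (\<lambda>i. f (\<lambda>j. if j = i then 1 else 0))"
  have "a \<noteq> (\<lambda>_. 0)"
  proof
    assume "a = (\<lambda>_. 0)"
    then have "\<And>i. a i = 0" by simp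
    then have z: "\<And>i. f (\<lambda>j. if j = i then 1 else 0) = 0" unfolding a_def .
    have "f b = (\<Sum>i\<in>UNIV. f (\<lambda>j. if j = i then 1 else 0) * b i)" by (rule functional_repr[OF lin])
    also have "\<dots> = 0" by (simp only: z mult_zero_left sum.neutral_const)
    finally have "f b = 0" .
    with fb show False by simp
  qed
  moreover have "\<forall>x\<in>X. (\<Sum>i\<in>UNIV. a i * x i) = 0"
  proof
    fix x assume "x \<in> X"
    then have "f x = 0" using fX B(3) by auto
    moreover have "f x = (\<Sum>i\<in>UNIV. a i * x i)" unfolding a_def by (rule functional_repr[OF lin])
    ultimately show "(\<Sum>i\<in>UNIV. a i * x i) = 0" by simp
  qed
  ultimately show False using assms unfolding nondegenerate_def by blast
qed



lemma span_sub: "A \<subseteq> FV.span B \<Longrightarrow> FV.span A \<subseteq> FV.span B"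
  by (rule FV.span_minimal[OF _ FV.subspace_span])

lemma proj_distinct_snoc:
  assumes "proj_distinct xs" "\<forall>x\<in>set xs. \<forall>c. y \<noteq> smult_vec c x \<and> x \<noteq> smult_vec c y"
  shows "proj_distinct (xs @ [y])"
  unfolding proj_distinct_def
proof (intro allI impI)
  fix i j c assume i: "i < length (xs @ [y])" and j: "j < length (xs @ [y])" and ij: "i \<noteq> j"
  show "(xs @ [y]) ! j \<noteq> smult_vec c ((xs @ [y]) ! i)"
  proof (cases "i < length xs")
    case True
    show ?thesis
    proof (cases "j < length xs")
      case True
      then show ?thesis using \<open>i < length xs\<close> ij assms(1) by (simp add: nth_append proj_distinct_def)
    next
      case False
      then have "j = length xs" using j by simp
      then show ?thesis using \<open>i < length xs\<close> assms(2) nth_mem[OF \<open>i < length xs\<close>] by (simp add: nth_append)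
    qed
  next
    case False
    then have "i = length xs" using i by simp
    then have "j < length xs" using ij j by simp
    then show ?thesis using \<open>i = length xs\<close> assms(2) nth_mem[OF \<open>j < length xs\<close>] by (simp add: nth_append)
  qed
qed

lemma insert_distinct:
  assumes X: "proj_cone X" and xs: "set xs \<subseteq> X" "proj_distinct xs" and y: "y \<in> X"
  shows "\<exists>zs. set zs \<subseteq> X \<and> proj_distinct zs \<and> length zs \<le> Suc (length xs)
           \<and> insert y (set xs) \<subseteq> FV.span (set zs)"
proof (cases "\<exists>x\<in>set xs. \<exists>c. y = smult_vec c x \<or> x = smult_vec c y")
  case True
  then obtain x c where x: "x \<in> set xs" and d: "y = smult_vec c x \<or> x = smult_vec c y" by blast
  have "y \<in> FV.span (set xs)"
  proof (cases "y = smult_vec c x")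
    case True then show ?thesis using x by (simp add: FV.span_scale FV.span_base)
  next
    case False
    then have xe: "x = smult_vec c y" using d by simp
    have "x \<noteq> (\<lambda>_. 0)" using X x xs unfolding proj_cone_def by auto
    then have "c \<noteq> 0" using xe by (auto simp: smult_vec_def)
    then have "y = smult_vec (inverse c) x" using xe by (auto simp: smult_vec_def fun_eq_iff)
    then show ?thesis using x by (simp add: FV.span_scale FV.span_base)
  qed
  then show ?thesis using xs by (intro exI[of _ xs]) (auto simp: FV.span_base)
next
  case False
  then have "proj_distinct (xs @ [y])" using proj_distinct_snoc[OF xs(2)] by blast
  then show ?thesis using xs y by (intro exI[of _ "xs @ [y]"]) (auto simp: FV.span_base)
qed

lemma merge_distinct:
  assumes X: "proj_cone X" and xs: "set xs \<subseteq> X" "proj_distinct xs" and ys: "set ys \<subseteq> X"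
  shows "\<exists>zs. set zs \<subseteq> X \<and> proj_distinct zs \<and> length zs \<le> length xs + length ys
           \<and> set xs \<union> set ys \<subseteq> FV.span (set zs)"
  using ys
proof (induct ys)
  case Nil
  then show ?case using xs by (intro exI[of _ xs]) (auto simp: FV.span_base)
next
  case (Cons y ys)
  then obtain zs where zs: "set zs \<subseteq> X" "proj_distinct zs" "length zs \<le> length xs + length ys"
     "set xs \<union> set ys \<subseteq> FV.span (set zs)" by auto
  obtain ws where ws: "set ws \<subseteq> X" "proj_distinct ws" "length ws \<le> Suc (length zs)"
     "insert y (set zs) \<subseteq> FV.span (set ws)"
    using insert_distinct[OF X zs(1,2), of y] Cons.prems by auto
  have "FV.span (set zs) \<subseteq> FV.span (set ws)"
    using ws(4) span_sub by auto
  then show ?case using ws zs by (intro exI[of _ ws]) auto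
qed

lemma span_exists:
  assumes X: "proj_cone X" and v: "v \<in> FV.span X"
  shows "\<exists>r. spanned_by X r v"
proof -
  obtain T r where T: "finite T" "T \<subseteq> X" and vT: "v = (\<Sum>a\<in>T. smult_vec (r a) a)"
    using v unfolding FV.span_explicit by auto
  obtain ys where ys: "set ys = T" using finite_list[OF T(1)] by auto
  obtain zs where zs: "set zs \<subseteq> X" "proj_distinct zs" "T \<subseteq> FV.span (set zs)"
    using merge_distinct[OF X, of "[]" ys] T ys by (auto simp: proj_distinct_def)
  have "v \<in> FV.span T" unfolding vT by (rule FV.span_sum, rule FV.span_scale, rule FV.span_base)
  then have "v \<in> FV.span (set zs)"
    using zs(3) span_sub by auto
  then show ?thesis using zs unfolding spanned_by_def lin_span_eq by blast
qed

lemma rank_le: "spanned_by X r v \<Longrightarrow> X_rank X v \<le> r"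
  unfolding X_rank_def by (rule Least_le)

lemma rank_spanned: "\<exists>r. spanned_by X r v \<Longrightarrow> spanned_by X (X_rank X v) v"
  unfolding X_rank_def by (rule LeastI_ex)

lemma rank_comb:
  assumes X: "proj_cone X" and p: "spanned_by X a p" and z: "spanned_by X b z"
  shows "X_rank X (p + smult_vec c z) \<le> a + b"
proof -
  obtain xs where xs: "length xs = a" "set xs \<subseteq> X" "proj_distinct xs" "p \<in> FV.span (set xs)"
    using p unfolding spanned_by_def lin_span_eq by auto
  obtain ys where ys: "length ys = b" "set ys \<subseteq> X" "z \<in> FV.span (set ys)"
    using z unfolding spanned_by_def lin_span_eq by auto
  obtain zs where zs: "set zs \<subseteq> X" "proj_distinct zs" "length zs \<le> a + b"
    "set xs \<union> set ys \<subseteq> FV.span (set zs)"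
    using merge_distinct[OF X xs(2,3) ys(2)] xs ys by auto
  have s: "FV.span (set xs) \<subseteq> FV.span (set zs)" "FV.span (set ys) \<subseteq> FV.span (set zs)"
    using zs(4) span_sub by auto
  have "p + smult_vec c z \<in> FV.span (set zs)"
    using s xs(4) ys(3) by (intro FV.span_add FV.span_scale) auto
  then have "spanned_by X (length zs) (p + smult_vec c z)"
    using zs unfolding spanned_by_def lin_span_eq by blast
  then show ?thesis using rank_le zs(3) by fastforce
qed



lemma polyfun_transl: "f \<in> polyfun \<Longrightarrow> (\<lambda>x. f (x + z)) \<in> polyfun"
proof (induct rule: polyfun.induct)
  case (pf_const c) then show ?case by (rule polyfun.pf_const)
next
  case (pf_coord i)
  have "(\<lambda>x. x i + z i) \<in> polyfun" by (rule polyfun.pf_add[OF polyfun.pf_coord polyfun.pf_const])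
  then show ?case by simp
next
  case (pf_add f g) show ?case using polyfun.pf_add[OF pf_add(2) pf_add(4)] by simp
next
  case (pf_mult f g) show ?case using polyfun.pf_mult[OF pf_mult(2) pf_mult(4)] by simp
qed

lemma closed_transl:
  assumes "zariski_closed A" shows "zariski_closed {y. y + z \<in> A}"
proof -
  obtain F where F: "F \<subseteq> polyfun" "A = {x. \<forall>f\<in>F. f x = 0}" using assms unfolding zariski_closed_def by blast
  define G where "G = (\<lambda>f x. f (x + z)) ` F"
  have "G \<subseteq> polyfun"
  proof
    fix h assume "h \<in> G"
    then obtain f where "f \<in> F" "h = (\<lambda>x. f (x + z))" unfolding G_def by blast
    then show "h \<in> polyfun" using F polyfun_transl by blast
  qed
  moreover have "{y. y + z \<in> A} = {x. \<forall>g\<in>G. g x = 0}"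
    unfolding G_def F(2) by auto
  ultimately show ?thesis unfolding zariski_closed_def by (intro exI conjI)
qed

lemma closed_point: "zariski_closed {w :: 'n \<Rightarrow> 'a::comm_ring_1}"
proof -
  let ?G = "(\<lambda>i x. x i + (- w i)) ` UNIV"
  have "(\<lambda>x. x i + (- w i)) \<in> polyfun" for i by (rule polyfun.pf_add[OF polyfun.pf_coord polyfun.pf_const])
  then have "?G \<subseteq> polyfun" by auto
  moreover have "{w} = {x. \<forall>g\<in>?G. g x = 0}" by (auto simp: fun_eq_iff)
  ultimately show ?thesis unfolding zariski_closed_def by (intro exI conjI)
qed

lemma closed_union:
  assumes "zariski_closed A" "zariski_closed (B :: ('n \<Rightarrow> 'a::idom) set)"
  shows "zariski_closed (A \<union> B)"
proof -
  obtain F where F: "F \<subseteq> polyfun" "A = {x. \<forall>f\<in>F. f x = 0}" using assms unfolding zariski_closed_def by blast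
  obtain G where G: "G \<subseteq> polyfun" "B = {x. \<forall>f\<in>G. f x = 0}" using assms unfolding zariski_closed_def by blast
  let ?H = "(\<lambda>(f,g) x. f x * g x) ` (F \<times> G)"
  have "?H \<subseteq> polyfun"
  proof
    fix h assume "h \<in> ?H"
    then obtain f g where "f \<in> F" "g \<in> G" "h = (\<lambda>x. f x * g x)" by auto
    then show "h \<in> polyfun" using F G by (auto intro: polyfun.pf_mult)
  qed
  moreover have "A \<union> B = {x. \<forall>h\<in>?H. h x = 0}"
  proof (intro equalityI subsetI)
    fix x assume "x \<in> A \<union> B"
    then show "x \<in> {x. \<forall>h\<in>?H. h x = 0}" using F G by auto
  next
    fix x assume x: "x \<in> {x. \<forall>h\<in>?H. h x = 0}"
    show "x \<in> A \<union> B"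
    proof (cases "x \<in> A")
      case False
      then obtain f where f: "f \<in> F" "f x \<noteq> 0" using F by auto
      have "\<forall>g\<in>G. g x = 0"
      proof
        fix g assume "g \<in> G"
        then have "f x * g x = 0" using x f by force
        then show "g x = 0" using f by simp
      qed
      then show ?thesis using G by auto
    qed simp
  qed
  ultimately show ?thesis unfolding zariski_closed_def by (intro exI conjI)
qed

lemma closure_sub: "zariski_closed C \<Longrightarrow> S \<subseteq> C \<Longrightarrow> zariski_closure S \<subseteq> C"
  unfolding zariski_closure_def by auto

lemma closure_sup: "S \<subseteq> zariski_closure S"
  unfolding zariski_closure_def by auto

lemma polyfun_line: "f \<in> polyfun \<Longrightarrow> \<exists>p. \<forall>t. f (\<lambda>i. t * e i) = poly p t"
proof (induct rule: polyfun.induct)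
  case (pf_const c) then show ?case by (intro exI[of _ "[:c:]"]) simp
next
  case (pf_coord i) then show ?case by (intro exI[of _ "[:0, e i:]"]) (simp add: mult.commute)
next
  case (pf_add f g)
  then obtain p q where "\<forall>t. f (\<lambda>i. t * e i) = poly p t" "\<forall>t. g (\<lambda>i. t * e i) = poly q t" by blast
  then show ?case by (intro exI[of _ "p + q"]) simp
next
  case (pf_mult f g)
  then obtain p q where "\<forall>t. f (\<lambda>i. t * e i) = poly p t" "\<forall>t. g (\<lambda>i. t * e i) = poly q t" by blast
  then show ?case by (intro exI[of _ "p * q"]) simp
qed

lemma nonzero_outside:
  assumes "zariski_closed A" "A \<noteq> UNIV"
  shows "\<exists>q :: 'n \<Rightarrow> 'a::field_char_0. q \<noteq> (\<lambda>_. 0) \<and> q \<notin> A"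
proof -
  obtain F where F: "F \<subseteq> polyfun" "A = {x. \<forall>f\<in>F. f x = 0}" using assms unfolding zariski_closed_def by blast
  obtain w where w: "w \<notin> A" using assms by auto
  show ?thesis
  proof (cases "w = (\<lambda>_. 0)")
    case False then show ?thesis using w by blast
  next
    case True
    then obtain f where f: "f \<in> F" "f (\<lambda>_. 0) \<noteq> 0" using w F by auto
    obtain p where p: "\<forall>t. f (\<lambda>i. t * 1) = poly p t" using polyfun_line[of f "\<lambda>_. 1"] f F by blast
    have "poly p 0 \<noteq> 0" using p f by (metis mult_zero_left)
    then have "p \<noteq> 0" by auto
    then have fin: "finite {t. poly p t = 0}" by (rule poly_roots_finite)
    have "infinite (UNIV :: 'a set)" by (rule infinite_UNIV_char_0)
    then have "infinite (UNIV - insert 0 {t. poly p t = 0})" using fin by (simp add: Diff_infinite_finite)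
    then obtain t where "t \<in> UNIV - insert 0 {t. poly p t = 0}" using infinite_imp_nonempty by blast
    then have t: "t \<noteq> 0" "poly p t \<noteq> 0" by auto
    have "(\<lambda>i::'n. t * 1) \<noteq> (\<lambda>_. 0)" using t by (auto simp: fun_eq_iff)
    moreover have "f (\<lambda>i::'n. t * 1) \<noteq> 0" using p t by simp
    then have "(\<lambda>i::'n. t * 1) \<notin> A" using F f by blast
    ultimately show ?thesis by blast
  qed
qed



lemma proj_distinct_distinct: "proj_distinct xs \<Longrightarrow> distinct xs"
  unfolding proj_distinct_def distinct_conv_nth
  by (metis smult_vec_def mult_1 ext)

lemma proj_distinct_take: "proj_distinct xs \<Longrightarrow> proj_distinct (take k xs)"
  unfolding proj_distinct_def by auto

lemma proj_distinct_drop: "proj_distinct xs \<Longrightarrow> proj_distinct (drop k xs)"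
  unfolding proj_distinct_def
proof (intro allI impI)
  fix i j c assume a: "\<forall>i<length xs. \<forall>j<length xs. i \<noteq> j \<longrightarrow> (\<forall>c. xs ! j \<noteq> smult_vec c (xs ! i))"
    and i: "i < length (drop k xs)" and j: "j < length (drop k xs)" and ij: "i \<noteq> j"
  have "k + i < length xs" "k + j < length xs" "k + i \<noteq> k + j" using i j ij by auto
  then show "drop k xs ! j \<noteq> smult_vec c (drop k xs ! i)" using a by auto
qed

lemma main:
  fixes X :: "('n::finite \<Rightarrow> 'a::field_char_0) set"
  assumes X: "proj_cone X" and sp: "\<And>v. \<exists>r. spanned_by X r v"
    and gen: "generic_rank X g" and k1: "1 \<le> k" and kg: "k \<le> g - 1"
  shows "\<not> secant_var X k \<subseteq> W_set X (2 * g - k + 1)"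
proof
  assume sub: "secant_var X k \<subseteq> W_set X (2 * g - k + 1)"
  obtain A where A: "zariski_closed A" "A \<noteq> UNIV"
    and hA: "\<And>v. v \<noteq> (\<lambda>_. 0) \<Longrightarrow> v \<notin> A \<Longrightarrow> X_rank X v = g"
    using gen unfolding generic_rank_def by blast
  obtain q where q: "q \<noteq> (\<lambda>_. 0)" "q \<notin> A" using nonzero_outside[OF A] by blast
  have "spanned_by X g q" using rank_spanned[OF sp, of q] hA[OF q] by simp
  then obtain xs where xs: "length xs = g" "set xs \<subseteq> X" "proj_distinct xs" "q \<in> FV.span (set xs)"
    unfolding spanned_by_def lin_span_eq by blast
  obtain u where qu: "q = (\<Sum>v\<in>set xs. smult_vec (u v) v)"
    using xs(4) FV.span_finite[of "set xs"] by auto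
  define ys where "ys = take k xs"
  define zs where "zs = drop k xs"
  have dist: "distinct xs" using proj_distinct_distinct[OF xs(3)] .
  have xsyz: "xs = ys @ zs" unfolding ys_def zs_def by simp
  have disj: "set ys \<inter> set zs = {}" using dist xsyz by (metis distinct_append)
  define y where "y = (\<Sum>v\<in>set ys. smult_vec (u v) v)"
  define z where "z = (\<Sum>v\<in>set zs. smult_vec (u v) v)"
  have qyz: "q = y + z" unfolding qu y_def z_def
    by (subst xsyz, simp only: set_append, rule sum.union_disjoint) (use disj in auto)
  have lys: "length ys = k" using xs(1) kg k1 unfolding ys_def by simp
  have lzs: "length zs = g - k" using xs(1) unfolding zs_def by simp
  have ysX: "set ys \<subseteq> X" "set zs \<subseteq> X" using xs(2) xsyz by auto
  have yspan: "y \<in> FV.span (set ys)" unfolding y_def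
    by (rule FV.span_sum, rule FV.span_scale, rule FV.span_base)
  have zspan: "z \<in> FV.span (set zs)" unfolding z_def
    by (rule FV.span_sum, rule FV.span_scale, rule FV.span_base)
  have sy: "spanned_by X k y" unfolding spanned_by_def lin_span_eq
    apply (rule exI[of _ ys])
    using lys ysX yspan proj_distinct_take[OF xs(3), of k] ys_def by simp
  have sz: "spanned_by X (g - k) z" unfolding spanned_by_def lin_span_eq
    apply (rule exI[of _ zs])
    using lzs ysX zspan proj_distinct_drop[OF xs(3), of k] zs_def by simp
  have y0: "y \<noteq> (\<lambda>_. 0)"
  proof
    assume "y = (\<lambda>_. 0)"
    then have "y = 0" by (simp add: zero_fun_def)
    then have "q = z" using qyz by simp
    then have "X_rank X q \<le> g - k" using rank_le[OF sz] by simp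
    then show False using hA[OF q] k1 kg by simp
  qed
  have ymem: "y \<in> {v. v \<noteq> (\<lambda>_. 0) \<and> X_rank X v \<le> k}" using y0 rank_le[OF sy] by simp
  have ysec: "y \<in> secant_var X k"
    unfolding secant_var_def proj_closure_def using y0 closure_sup[of "{v. v \<noteq> (\<lambda>_. 0) \<and> X_rank X v \<le> k}"] ymem
    by (simp add: subset_iff)
  define j where "j = 2 * g - k + 1"
  have "\<exists>w. w \<noteq> (\<lambda>_. 0) \<and> X_rank X w = j \<and> w + z \<notin> A \<and> w + z \<noteq> (\<lambda>_. 0)"
  proof (rule ccontr)
    assume nt: "\<not> ?thesis"
    define C where "C = {w. w + z \<in> A} \<union> {w. w + z \<in> {(\<lambda>_. 0)}}"
    have Cc: "zariski_closed C" unfolding C_def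
      by (intro closed_union closed_transl A closed_point)
    have "{v. v \<noteq> (\<lambda>_. 0) \<and> X_rank X v = j} \<subseteq> C" using nt unfolding C_def by auto
    then have "zariski_closure {v. v \<noteq> (\<lambda>_. 0) \<and> X_rank X v = j} \<subseteq> C" by (rule closure_sub[OF Cc])
    then have "W_set X j \<subseteq> C" unfolding W_set_def proj_closure_def by blast
    then have "y \<in> C" using sub ysec j_def by blast
    then show False using qyz q unfolding C_def by auto
  qed
  then obtain w where w: "w \<noteq> (\<lambda>_. 0)" "X_rank X w = j" "w + z \<notin> A" "w + z \<noteq> (\<lambda>_. 0)" by blast
  have "spanned_by X g (w + z)" using rank_spanned[OF sp, of "w + z"] hA[OF w(4) w(3)] by simp
  then have "X_rank X ((w + z) + smult_vec (-1) z) \<le> g + (g - k)" by (rule rank_comb[OF X _ sz])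
  moreover have "(w + z) + smult_vec (-1) z = w" by (simp add: fun_eq_iff smult_vec_def)
  ultimately have "X_rank X w \<le> g + (g - k)" by simp
  then show False using w(2) j_def kg k1 by simp
qed

theorem corollary3p4:
  fixes X :: "('n::finite \<Rightarrow> 'a::field_char_0) set" and g m :: nat
  assumes "alg_closed_field TYPE('a)"
    and "proj_variety X" and "nondegenerate X"
    and "generic_rank X g" and "max_rank X m"
  shows "(\<forall>k. 1 \<le> k \<and> k \<le> g - 1 \<longrightarrow> \<not> secant_var X k \<subseteq> W_set X (2 * g - k + 1))
       \<and> (m = 2 * g \<longrightarrow> (\<forall>k. 1 \<le> k \<and> k \<le> g - 1 \<longrightarrow> \<not> secant_var X k \<subseteq> W_set X (m - k + 1)))"
proof -
  have X: "proj_cone X" using assms(2) unfolding proj_variety_def by blast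
  have sp: "\<exists>r. spanned_by X r v" for v
    using span_exists[OF X] nondeg_span[OF assms(3)] by blast
  have *: "\<forall>k. 1 \<le> k \<and> k \<le> g - 1 \<longrightarrow> \<not> secant_var X k \<subseteq> W_set X (2 * g - k + 1)"
    using main[OF X sp assms(4)] by blast
  then show ?thesis by auto
qed

end
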